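(* Let $p>3$ be a prime. Then, modulo $p$: $$P_{\frac{p-1}2}(-31)\equiv\sum_{k=0}^{\frac{p-1}2}\binom{2k}k^2\equiv\sum_{k=0}^{\frac{p-1}2}\frac{\binom{2k}k^2}{256^k}\equiv-\Big(\frac p3\Big)\sum_{x=0}^{p-1}\Big(\frac{x^3-723x-7378}p\Big),$$ $$P_{\frac{p-1}2}(33)\equiv\sum_{k=0}^{\frac{p-1}2}(-1)^k\binom{2k}k^2\equiv(-1)^{\frac{p-1}2}\sum_{k=0}^{\frac{p-1}2}\frac{\binom{2k}k^2}{(-256)^k}\equiv(-1)^{\frac{p+1}2}\sum_{x=0}^{p-1}\Big(\frac{x^3-91x+330}p\Big),$$ $$P_{\frac{p-1}2}(-15)\equiv\sum_{k=0}^{\frac{p-1}2}\frac{\binom{2k}k^2}{2^k}\equiv\Big(\frac2p\Big)\sum_{k=0}^{\frac{p-1}2}\frac{\binom{2k}k^2}{128^k}\equiv(-1)^{\frac{p+1}2}\sum_{x=0}^{p-1}\Big(\frac{x^3-19x-30}p\Big),$$ $$P_{\frac{p-1}2}(9)\equiv\sum_{k=0}^{\frac{p-1}2}\frac{\binom{2k}k^2}{(-4)^k}\equiv(-1)^{\frac{p-1}2}\sum_{k=0}^{\frac{p-1}2}\frac{\binom{2k}k^2}{(-64)^k}\equiv(-1)^{\frac{p+1}2}\sum_{x=0}^{p-1}\Big(\frac{x^3-7x+6}p\Big),$$ $$P_{\frac{p-1}2}(5)\equiv\sum_{k=0}^{\frac{p-1}2}\frac{\binom{2k}k^2}{(-8)^k}\equiv\Big(\frac{-2}p\Big)\sum_{k=0}^{\frac{p-1}2}\frac{\binom{2k}k^2}{(-32)^k}\equiv-\Big(\frac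 p3\Big)\sum_{x=0}^{p-1}\Big(\frac{x^3-21x+20}p\Big).$$
   Context: Congruences are between rational numbers whose denominators are prime to $p$. $\big(\frac ap\big)$ is the Legendre symbol (equal to $0$ if $p\mid a$). $P_n(x)$ is the $n$-th Legendre polynomial, defined by $\frac1{\sqrt{1-2xt+t^2}}=\sum_{n\ge0}P_n(x)t^n$, equivalently $P_n(x)=\frac1{2^n}\sum_{k=0}^{[n/2]}\frac{(-1)^k(2n-2k)!}{k!(n-k)!(n-2k)!}x^{n-2k}$. *)

theory Defs
  imports Complex_Main "HOL-Number_Theory.Number_Theory"
begin

definition p_integral :: "nat \<Rightarrow> rat \<Rightarrow> bool" where
  "p_integral p a \<longleftrightarrow> (\<exists>m n :: int. coprime n (int p) \<and> a = of_int m / of_int n)"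

definition qcong :: "rat \<Rightarrow> rat \<Rightarrow> nat \<Rightarrow> bool" where
  "qcong a b p \<longleftrightarrow> p_integral p a \<and> p_integral p b \<and> p_integral p ((a - b) / of_nat p)"

definition legendre_poly :: "nat \<Rightarrow> rat \<Rightarrow> rat" where
  "legendre_poly n x = (1 / 2 ^ n) *
     (\<Sum>k\<le>n div 2. (-1) ^ k * of_nat (fact (2*n - 2*k)) /
        (of_nat (fact k) * of_nat (fact (n - k)) * of_nat (fact (n - 2*k))) * x ^ (n - 2*k))"

end

theory Submission
  imports Defs "HOL-Computational_Algebra.Polynomial"
begin


lemma absorb: "Suc k * (n choose Suc k) = (n - k) * (n choose k)"
  using binomial_absorption binomial_absorb_comp by metis

lemma fact_coprime:
  assumes "prime p" "k < p" shows "coprime (int (fact k)) (int p)"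
proof -
  have "\<not> p dvd fact k" using assms prime_dvd_fact_iff by auto
  hence "coprime (fact k) p" using assms(1) prime_imp_coprime coprime_commute by blast
  thus ?thesis using coprime_int_iff[of "fact k" p] by simp
qed

lemma small_coprime:
  assumes "prime p" "0 < k" "k < p" shows "coprime (int k) (int p)"
proof -
  have "\<not> p dvd k" using assms by (auto dest: dvd_imp_le)
  hence "coprime p k" using assms(1) prime_imp_coprime by blast
  thus ?thesis by (simp add: coprime_commute)
qed

lemma binom_nk:
  assumes p: "prime p" and n: "2*n+1 = p" and k: "k \<le> n"
  shows "[int (n+k choose k) = (-1)^k * int (n choose k)] (mod int p)"
  using k
proof (induction k)
  case 0 then show ?case by simp
next
  case (Suc k)
  have IH: "[int (n+k choose k) = (-1)^k * int (n choose k)] (mod int p)" using Suc by simp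
  have e1: "int (Suc k) * int (n + Suc k choose Suc k) = int (Suc (n+k)) * int (n+k choose k)"
    using Suc_times_binomial[of k "n+k"] by (metis add_Suc_right of_nat_mult)
  have e2: "int (Suc k) * int (n choose Suc k) = int (n - k) * int (n choose k)"
    using absorb[of k n] by (metis of_nat_mult)
  have c: "[int (Suc (n+k)) = - int (n-k)] (mod int p)"
    using Suc.prems n by (auto simp: cong_iff_dvd_diff of_nat_diff)
  have "[int (Suc k) * int (n + Suc k choose Suc k) = (- int (n-k)) * ((-1)^k * int (n choose k))] (mod int p)"
    unfolding e1 by (intro cong_mult c IH)
  also have "(- int (n-k)) * ((-1)^k * int (n choose k)) = (-1)^Suc k * (int (n-k) * int (n choose k))"
    by (simp add: algebra_simps)
  also have "\<dots> = (-1)^Suc k * (int (Suc k) * int (n choose Suc k))" using e2 by simp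
  also have "\<dots> = int (Suc k) * ((-1)^Suc k * int (n choose Suc k))" by (simp add: algebra_simps)
  finally have "[int (Suc k) * int (n + Suc k choose Suc k) = int (Suc k) * ((-1)^Suc k * int (n choose Suc k))] (mod int p)" .
  moreover have "coprime (int (Suc k)) (int p)" using small_coprime[OF p, of "Suc k"] Suc.prems n by linarith
  ultimately show ?case using cong_mult_lcancel by blast
qed

lemma fact2k:
  assumes p: "prime p" and n: "2*n+1 = p" and k: "k \<le> n"
  shows "[int (fact (2*k)) = (-4)^k * int (n choose k) * int (fact k)^2] (mod int p)"
  using k
proof (induction k)
  case 0 then show ?case by simp
next
  case (Suc k)
  have IH: "[int (fact (2*k)) = (-4)^k * int (n choose k) * int (fact k)^2] (mod int p)" using Suc by simp
  have e2: "int (Suc k) * int (n choose Suc k) = int (n - k) * int (n choose k)"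
    using absorb[of k n] by (metis of_nat_mult)
  have f: "int (fact (2 * Suc k)) = (2*int k+2)*(2*int k+1) * int (fact (2*k))"
    by (simp add: algebra_simps)
  have c: "[(2*int k+2)*(2*int k+1) = (-4)*(int k+1)*int (n-k)] (mod int p)"
  proof -
    have "(2*int k+2)*(2*int k+1) - (-4)*(int k+1)*int (n-k) = (2*int k+2) * int p"
    proof -
      have "int p = 2*int n+1" using n by linarith
      thus ?thesis using Suc.prems by (simp add: of_nat_diff algebra_simps)
    qed
    thus ?thesis by (simp add: cong_iff_dvd_diff)
  qed
  have "[int (fact (2 * Suc k)) = ((-4)*(int k+1)*int (n-k)) * ((-4)^k * int (n choose k) * int (fact k)^2)] (mod int p)"
    unfolding f by (intro cong_mult c IH)
  also have "((-4)*(int k+1)*int (n-k)) * ((-4)^k * int (n choose k) * int (fact k)^2)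
     = (-4)^Suc k * (int (n-k) * int (n choose k)) * (int k + 1) * (int (fact k))^2"
    by (simp add: algebra_simps)
  also have "\<dots> = (-4)^Suc k * (int (Suc k) * int (n choose Suc k)) * (int k + 1) * (int (fact k))^2"
    using e2 by simp
  also have "\<dots> = (-4)^Suc k * int (n choose Suc k) * int (fact (Suc k))^2"
    by (simp add: algebra_simps power2_eq_square)
  finally show ?case .
qed

lemma binom_central:
  assumes p: "prime p" and n: "2*n+1 = p" and k: "k \<le> n"
  shows "[int (2*k choose k) = (-4)^k * int (n choose k)] (mod int p)"
proof -
  have e0: "fact (2*k) = (fact k)^2 * (2*k choose k)"
    using binomial_fact_lemma[of k "2*k"] by (simp add: power2_eq_square algebra_simps)
  have e: "int (fact (2*k)) = int (fact k)^2 * int (2*k choose k)"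
    using arg_cong[OF e0, of int] by (simp only: of_nat_mult of_nat_power)
  have "[int (fact k)^2 * int (2*k choose k) = int (fact k)^2 * ((-4)^k * int (n choose k))] (mod int p)"
    using fact2k[OF assms] unfolding e by (simp add: algebra_simps)
  moreover have "coprime (int (fact k)^2) (int p)" using fact_coprime[OF p] k n by auto
  ultimately show ?thesis using cong_mult_lcancel by blast
qed



lemma powsum_zero:
  assumes p: "prime p" and j: "0 < j" "\<not> (p - 1) dvd j"
  shows "[(\<Sum>x\<in>{1..<int p}. x^j) = 0] (mod int p)"
proof -
  obtain g where g: "residue_primroot p g" using prime_primitive_root_exists p prime_gt_1_nat by blast
  have cg: "coprime p g" and og: "ord p g = p - 1"
    using g p by (auto simp: residue_primroot_def totient_prime)
  define G where "G = int g"
  define P where "P = int p"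
  define S where "S = (\<Sum>x\<in>{1..<P}. x^j)"
  have cG: "coprime G P" using cg unfolding G_def P_def by (simp add: coprime_commute)
  have bij: "bij_betw (\<lambda>m. G * m mod P) {1..<P} {1..<P}"
    using bij_betw_int_remainders_mult[OF cG] .
  have "S = (\<Sum>m\<in>{1..<P}. (G * m mod P)^j)"
    unfolding S_def using sum.reindex_bij_betw[OF bij, of "\<lambda>x. x^j"] by simp
  also have "[\<dots> = (\<Sum>m\<in>{1..<P}. (G * m)^j)] (mod P)"
    by (intro cong_sum cong_pow) (simp add: cong_def)
  also have "(\<Sum>m\<in>{1..<P}. (G * m)^j) = G^j * S"
    unfolding S_def by (simp add: sum_distrib_left power_mult_distrib)
  finally have "[G^j * S = 1 * S] (mod P)" by (simp add: cong_sym)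
  hence "P dvd (G^j - 1) * S" by (simp add: cong_iff_dvd_diff algebra_simps)
  moreover have "prime P" using p unfolding P_def by simp
  moreover have "\<not> P dvd G^j - 1"
  proof
    assume "P dvd G^j - 1"
    hence "[G^j = 1] (mod P)" by (simp add: cong_iff_dvd_diff)
    hence "[int (g^j) = int 1] (mod int p)" unfolding G_def P_def by simp
    hence "[g^j = 1] (mod p)" using cong_int_iff by blast
    hence "ord p g dvd j" using ord_divides by blast
    thus False using og j by simp
  qed
  ultimately have "P dvd S" using prime_dvd_mult_iff by blast
  thus ?thesis unfolding S_def P_def by (simp add: cong_0_iff)
qed

lemma fermat_int:
  assumes p: "prime p" and x: "x \<in> {1..<int p}"
  shows "[x^(p-1) = 1] (mod int p)"
proof -
  have "\<not> p dvd nat x" using x by (auto dest: dvd_imp_le)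
  hence "[nat x^(p-1) = 1] (mod p)" using fermat_theorem[OF p] by blast
  hence "[int (nat x^(p-1)) = int 1] (mod int p)" using cong_int_iff by blast
  thus ?thesis using x by simp
qed

lemma powsum:
  assumes p: "prime p" and i: "i < 2*(p-1)"
  shows "[(\<Sum>x\<in>{0..<int p}. x^i) = (if i = p - 1 then -1 else 0)] (mod int p)"
proof -
  have p2: "p \<ge> 2" using prime_ge_2_nat p by blast
  have split: "{0..<int p} = insert 0 {1..<int p}" using p2 by auto
  show ?thesis
  proof (cases "i = 0")
    case True
    then show ?thesis using p2 by (simp add: cong_0_iff)
  next
    case i0: False
    have s: "(\<Sum>x\<in>{0..<int p}. x^i) = (\<Sum>x\<in>{1..<int p}. x^i)"
      unfolding split using i0 by simp
    show ?thesis
    proof (cases "i = p - 1")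
      case True
      have "[(\<Sum>x\<in>{1..<int p}. x^i) = (\<Sum>x\<in>{1..<int p}. 1)] (mod int p)"
        using fermat_int[OF p] True by (intro cong_sum) auto
      moreover have "(\<Sum>x\<in>{1..<int p}. (1::int)) = int p - 1" using p2 by simp
      moreover have "[int p - 1 = -1] (mod int p)" by (simp add: cong_iff_dvd_diff)
      ultimately have "[(\<Sum>x\<in>{1..<int p}. x^i) = -1] (mod int p)" by (metis cong_trans)
      thus ?thesis using s True by simp
    next
      case False
      have "\<not> (p - 1) dvd i"
      proof
        assume "(p - 1) dvd i"
        then obtain c where c: "i = (p - 1) * c" by blast
        have "c \<noteq> 0" using i0 c by auto
        moreover have "c \<noteq> 1" using False c by auto
        moreover have "c < 2"
        proof -
          have "(p-1)*c < (p-1)*2" using i c by (simp add: mult.commute)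
          thus ?thesis by (simp only: mult_less_cancel1)
        qed
        ultimately show False by linarith
      qed
      then show ?thesis using s False powsum_zero[OF p] i0 by simp
    qed
  qed
qed

lemma powsum_poly:
  fixes Q :: "int poly"
  assumes p: "prime p" and d: "degree Q < 2*(p-1)"
  shows "[(\<Sum>y\<in>{0..<int p}. poly Q y) = - coeff Q (p-1)] (mod int p)"
proof -
  define N where "N = 2*(p-1)"
  have p2: "p \<ge> 2" using prime_ge_2_nat p by blast
  have pe: "poly Q y = (\<Sum>i<N. coeff Q i * y^i)" for y
  proof -
    have "poly Q y = (\<Sum>i\<le>degree Q. coeff Q i * y^i)" by (rule poly_altdef)
    also have "\<dots> = (\<Sum>i<N. coeff Q i * y^i)"
    proof (rule sum.mono_neutral_left)
      show "{..degree Q} \<subseteq> {..<N}" using d unfolding N_def by auto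
      show "\<forall>i\<in>{..<N} - {..degree Q}. coeff Q i * y ^ i = 0" by (simp add: coeff_eq_0)
    qed simp
    finally show ?thesis .
  qed
  have "(\<Sum>y\<in>{0..<int p}. poly Q y) = (\<Sum>i<N. coeff Q i * (\<Sum>y\<in>{0..<int p}. y^i))"
    unfolding pe sum_distrib_left by (rule sum.swap)
  also have "[\<dots> = (\<Sum>i<N. coeff Q i * (if i = p - 1 then -1 else 0))] (mod int p)"
    using powsum[OF p] unfolding N_def by (intro cong_sum cong_mult cong_refl) auto
  also have "(\<Sum>i<N. coeff Q i * (if i = p - 1 then -1 else 0)) = - coeff Q (p-1)"
  proof -
    have "p - 1 \<in> {..<N}" using p2 unfolding N_def by auto
    thus ?thesis by (simp add: if_distrib cong: if_cong)
  qed
  finally show ?thesis .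
qed

lemma Legendre_cong:
  assumes "[u = v] (mod m)" shows "Legendre u m = Legendre v m"
proof -
  have "[u = 0] (mod m) \<longleftrightarrow> [v = 0] (mod m)" using assms cong_sym cong_trans by metis
  moreover have "QuadRes m u \<longleftrightarrow> QuadRes m v"
    unfolding QuadRes_def using assms cong_sym cong_trans by metis
  ultimately show ?thesis unfolding Legendre_def by simp
qed



lemma shift_bij:
  fixes P r :: int assumes "P > 0"
  shows "bij_betw (\<lambda>y. (y + r) mod P) {0..<P} {0..<P}"
proof (rule bij_betwI[where g = "\<lambda>x. (x - r) mod P"])
  show "(\<lambda>y. (y + r) mod P) \<in> {0..<P} \<rightarrow> {0..<P}" using assms by auto
  show "(\<lambda>x. (x - r) mod P) \<in> {0..<P} \<rightarrow> {0..<P}" using assms by auto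
  fix x assume "x \<in> {0..<P}"
  then show "((x + r) mod P - r) mod P = x" by (simp add: mod_diff_left_eq)
next
  fix y assume "y \<in> {0..<P}"
  then show "((y - r) mod P + r) mod P = y" by (simp add: mod_add_left_eq)
qed

lemma coeff_cubic:
  fixes a b :: int
  shows "coeff (([:0,1:] * [:-a,1:] * [:-b,1:])^n) (2*n)
     = (-1)^n * (\<Sum>k\<le>n. int ((n choose k)^2) * a^(n-k) * b^k)"
proof -
  have "([:0,1:] * [:-a,1:] * [:-b,1:])^n = monom 1 n * ([:-a,1:]^n * [:-b,1:]^n)"
  proof -
    have m: "monom 1 n = [:0,1::int:]^n" by (simp add: monom_altdef)
    show ?thesis unfolding m by (simp only: power_mult_distrib mult.assoc)
  qed
  hence "coeff (([:0,1:] * [:-a,1:] * [:-b,1:])^n) (2*n) = coeff ([:-a,1:]^n * [:-b,1:]^n) n"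
    by (simp add: coeff_monom_mult mult_2)
  also have "\<dots> = (\<Sum>i\<le>n. coeff ([:-a,1:]^n) i * coeff ([:-b,1:]^n) (n-i))"
    by (rule coeff_mult)
  also have "\<dots> = (\<Sum>i\<le>n. (-1)^n * (int ((n choose i)^2) * a^(n-i) * b^i))"
  proof (rule sum.cong[OF refl])
    fix i assume i: "i \<in> {..n}"
    have i': "i \<le> n" using i by simp
    have "coeff ([:-a,1:]^n) i = of_nat (n choose i) * 1^i * (-a)^(n-i)"
      by (rule coeff_linear_poly_power[OF i'])
    hence c1: "coeff ([:-a,1:]^n) i = int (n choose i) * (-a)^(n-i)" by (simp only: power_one mult_1_right)
    have "coeff ([:-b,1:]^n) (n-i) = of_nat (n choose (n-i)) * 1^(n-i) * (-b)^(n-(n-i))"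
      by (rule coeff_linear_poly_power) simp
    moreover have "n - (n - i) = i" using i' by simp
    moreover have "n choose (n-i) = n choose i" using binomial_symmetric[OF i'] by simp
    ultimately have c2: "coeff ([:-b,1:]^n) (n-i) = int (n choose i) * (-b)^i" by (simp only: power_one mult_1_right)
    note c1 c2
    moreover have "(-a)^(n-i) * (-b)^i = (-1)^n * (a^(n-i) * b^i)"
    proof -
      have "(-a)^(n-i) * (-b)^i = ((-1)^(n-i) * (-1)^i) * (a^(n-i) * b^i)"
        by (simp only: power_minus[of a "n-i"] power_minus[of b i] mult_ac)
      also have "(-1::int)^(n-i) * (-1)^i = (-1)^(n-i+i)" by (simp only: power_add)
      also have "n - i + i = n" using i by simp
      finally show ?thesis .
    qed
    ultimately show "coeff ([:-a,1:]^n) i * coeff ([:-b,1:]^n) (n-i) = (-1)^n * (int ((n choose i)^2) * a^(n-i) * b^i)"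
      by (simp only: power2_eq_square of_nat_mult mult_ac)
  qed
  also have "\<dots> = (-1)^n * (\<Sum>k\<le>n. int ((n choose k)^2) * a^(n-k) * b^k)"
    by (simp add: sum_distrib_left)
  finally show ?thesis .
qed

lemma charsum:
  fixes r a b :: int
  assumes p: "prime p" "p > 3" and n: "n = (p-1) div 2"
  shows "[(\<Sum>x\<in>{0..<int p}. Legendre ((x - r)*(x - r - a)*(x - r - b)) (int p))
        = - ((-1)^n * (\<Sum>k\<le>n. int ((n choose k)^2) * a^(n-k) * b^k))] (mod int p)"
proof -
  define P where "P = int p"
  define Q where "Q = ([:0,1:] * [:-a,1:] * [:-b,1:])^n"
  have P0: "P > 0" using p unfolding P_def by simp
  have pn: "p - 1 = 2*n" using p n by (simp add: prime_odd_nat[of p] odd_two_times_div_two_nat)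
  have n1: "n \<ge> 1" using p n by auto
  have "(\<Sum>x\<in>{0..<P}. Legendre ((x - r)*(x - r - a)*(x - r - b)) P)
      = (\<Sum>y\<in>{0..<P}. Legendre (((y + r) mod P - r)*((y + r) mod P - r - a)*((y + r) mod P - r - b)) P)"
    using sum.reindex_bij_betw[OF shift_bij[OF P0, of r], of "\<lambda>x. Legendre ((x - r)*(x - r - a)*(x - r - b)) P"]
    by simp
  also have "\<dots> = (\<Sum>y\<in>{0..<P}. Legendre (y*(y-a)*(y-b)) P)"
  proof (rule sum.cong[OF refl])
    fix y
    have c: "[(y + r) mod P = y + r] (mod P)" by (simp add: cong_def)
    have "[((y + r) mod P - r)*((y + r) mod P - r - a)*((y + r) mod P - r - b)
          = ((y + r) - r)*((y + r) - r - a)*((y + r) - r - b)] (mod P)"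
      by (intro cong_mult cong_diff c cong_refl)
    thus "Legendre (((y + r) mod P - r)*((y + r) mod P - r - a)*((y + r) mod P - r - b)) P = Legendre (y*(y-a)*(y-b)) P"
      by (simp add: Legendre_cong)
  qed
  also have "[\<dots> = (\<Sum>y\<in>{0..<P}. (y*(y-a)*(y-b))^((p - 1) div 2))] (mod P)"
    unfolding P_def using p by (intro cong_sum euler_criterion) auto
  also have "(\<Sum>y\<in>{0..<P}. (y*(y-a)*(y-b))^((p - 1) div 2)) = (\<Sum>y\<in>{0..<P}. poly Q y)"
    unfolding Q_def n by (simp add: poly_power algebra_simps)
  also have "[\<dots> = - coeff Q (p - 1)] (mod P)"
  proof -
    have "degree Q \<le> 3 * n"
    proof -
      have "degree ([:0,1:] * [:-a,1:] * [:-b,1::int:]) \<le> 3"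
        by (rule order.trans[OF degree_mult_le]) (auto intro: order.trans[OF add_mono[OF degree_mult_le order.refl]])
      hence "degree Q \<le> 3 * n" unfolding Q_def
        by (intro order.trans[OF degree_power_le]) (simp add: mult.commute)
      thus ?thesis .
    qed
    hence "degree Q < 2*(p-1)" using pn n1 by linarith
    thus ?thesis unfolding P_def using powsum_poly[OF p(1)] by blast
  qed
  also have "coeff Q (p - 1) = (-1)^n * (\<Sum>k\<le>n. int ((n choose k)^2) * a^(n-k) * b^k)"
    unfolding Q_def pn by (rule coeff_cubic)
  finally show ?thesis unfolding P_def .
qed



lemma sum_reflect: "(\<Sum>k\<le>(n::nat). f k) = (\<Sum>k\<le>n. f (n - k))"
  by (rule sum.reindex_bij_witness[where i="\<lambda>i. n-i" and j="\<lambda>i. n-i"]) auto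

lemma const_mult_coeff: "coeff ([:c:] * p) k = c * coeff p k"
  by simp

lemma murphy_aux:
  fixes x :: rat
  shows "coeff (([:x,1:]^2 - 1)^n) n = (\<Sum>j\<le>n. of_nat (n choose j) * of_nat (n+j choose j) * 2^(n-j) * (x-1)^j)"
proof -
  define A where "A = [:x-1,1:]"
  have e1: "[:x,1:]^2 - 1 = A * (A + [:2:])" unfolding A_def
    by (simp add: power2_eq_square algebra_simps one_pCons)
  have "(A + [:2:])^n = (\<Sum>k\<le>n. of_nat (n choose k) * A^k * [:2:]^(n-k))"
    by (rule binomial_ring)
  hence "([:x,1:]^2 - 1)^n = (\<Sum>k\<le>n. [:of_nat (n choose k) * 2^(n-k):] * A^(n+k))"
    unfolding e1 power_mult_distrib
    by (simp add: sum_distrib_left of_nat_poly power_add algebra_simps poly_const_pow flip: mult.assoc)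
  hence "coeff (([:x,1:]^2 - 1)^n) n = (\<Sum>k\<le>n. of_nat (n choose k) * 2^(n-k) * coeff (A^(n+k)) n)"
    by (simp add: coeff_sum)
  also have "\<dots> = (\<Sum>j\<le>n. of_nat (n choose j) * of_nat (n+j choose j) * 2^(n-j) * (x-1)^j)"
  proof (rule sum.cong[OF refl])
    fix k assume "k \<in> {..n}"
    have "coeff (A^(n+k)) n = of_nat (n+k choose n) * 1^n * (x-1)^(n+k-n)"
      unfolding A_def by (rule coeff_linear_poly_power) simp
    moreover have "n+k choose n = n+k choose k" using binomial_symmetric[of k "n+k"] by simp
    ultimately show "of_nat (n choose k) * 2^(n-k) * coeff (A^(n+k)) n = of_nat (n choose k) * of_nat (n+k choose k) * 2^(n-k) * (x-1)^k"
      by simp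
  qed
  finally show ?thesis .
qed

lemma legendre_aux:
  fixes x :: rat
  shows "coeff (([:x,1:]^2 - 1)^n) n = 2^n * legendre_poly n x"
proof -
  define B where "B = [:x,1:]"
  have binom: "(B^2 + [:-1:])^n = (\<Sum>k\<le>n. of_nat (n choose k) * (B^2)^k * [:-1:]^(n-k))"
    by (rule binomial_ring)
  have eq: "B^2 - 1 = B^2 + [:-1:]" by (simp add: one_pCons)
  have "(B^2 - 1)^n = (\<Sum>k\<le>n. of_nat (n choose k) * (B^2)^k * [:-1:]^(n-k))"
    unfolding eq by (rule binom)
  also have "\<dots> = (\<Sum>k\<le>n. [:of_nat (n choose k) * (-1)^(n-k):] * B^(2*k))"
  proof (rule sum.cong[OF refl])
    fix k
    have "(B^2)^k = B^(2*k)" by (simp add: power_mult)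
    moreover have "[:-1:]^(n-k) = [:(-1::rat)^(n-k):]" by (rule poly_const_pow)
    moreover have "(of_nat (n choose k) :: rat poly) = [:of_nat (n choose k):]" by (rule of_nat_poly)
    ultimately show "of_nat (n choose k) * (B^2)^k * [:-1:]^(n-k) = [:of_nat (n choose k) * (-1)^(n-k):] * B^(2*k)"
      by (simp add: mult_ac)
  qed
  finally have "(B^2 - 1)^n = (\<Sum>k\<le>n. [:of_nat (n choose k) * (-1)^(n-k):] * B^(2*k))" .
  hence "coeff ((B^2 - 1)^n) n = (\<Sum>k\<le>n. of_nat (n choose k) * (-1)^(n-k) * coeff (B^(2*k)) n)"
    by (simp add: coeff_sum)
  also have "\<dots> = (\<Sum>m\<le>n. of_nat (n choose (n-m)) * (-1)^(n-(n-m)) * coeff (B^(2*(n-m))) n)"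
    by (rule sum_reflect)
  also have "\<dots> = (\<Sum>m\<le>n div 2. (-1)^m * of_nat (fact (2*n - 2*m)) /
        (of_nat (fact m) * of_nat (fact (n - m)) * of_nat (fact (n - 2*m))) * x^(n - 2*m))"
  proof (rule sum.mono_neutral_cong_right)
    show "{..n div 2} \<subseteq> {..n}" by auto
    show "\<forall>m\<in>{..n} - {..n div 2}. of_nat (n choose (n-m)) * (-1)^(n-(n-m)) * coeff (B^(2*(n-m))) n = (0::rat)"
    proof
      fix m assume "m \<in> {..n} - {..n div 2}"
      hence "2*(n-m) < n" by auto
      hence "coeff (B^(2*(n-m))) n = 0" unfolding B_def
        by (intro coeff_eq_0) (simp add: degree_power_eq)
      thus "of_nat (n choose (n-m)) * (-1)^(n-(n-m)) * coeff (B^(2*(n-m))) n = (0::rat)" by simp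
    qed
    fix m assume m: "m \<in> {..n div 2}"
    hence m2: "2*m \<le> n" by auto
    have c: "coeff (B^(2*(n-m))) n = of_nat (2*(n-m) choose n) * 1^n * x^(2*(n-m)-n)"
      unfolding B_def by (rule coeff_linear_poly_power) (use m2 in simp)
    have e1: "2*(n-m) - n = n - 2*m" "n - (n - m) = m" "2*n - 2*m = 2*(n-m)" using m2 by auto
    have b1: "(of_nat (n choose (n-m)) :: rat) = fact n / (fact m * fact (n-m))"
      using binomial_fact[of "n-m" n] e1 by (simp add: mult.commute)
    have b2: "(of_nat (2*(n-m) choose n) :: rat) = fact (2*(n-m)) / (fact n * fact (n - 2*m))"
    proof -
      have le: "n \<le> 2*(n-m)" using m2 by simp
      have "2*(n-m) - n = n - 2*m" using m2 by simp
      thus ?thesis using binomial_fact[OF le] by simp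
    qed
    show "of_nat (n choose (n-m)) * (-1)^(n-(n-m)) * coeff (B^(2*(n-m))) n =
      (-1)^m * of_nat (fact (2*n - 2*m)) /
        (of_nat (fact m) * of_nat (fact (n - m)) * of_nat (fact (n - 2*m))) * x^(n - 2*m)"
      unfolding c b1 b2 e1 by (simp add: field_simps)
  qed simp
  also have "\<dots> = 2^n * legendre_poly n x"
    unfolding legendre_poly_def by simp
  finally show ?thesis unfolding B_def by simp
qed

lemma legendre_murphy:
  "legendre_poly n (x::rat) = (\<Sum>j\<le>n. of_nat (n choose j) * of_nat (n+j choose j) * ((x-1)/2)^j)"
proof -
  have "2^n * legendre_poly n x = (\<Sum>j\<le>n. of_nat (n choose j) * of_nat (n+j choose j) * 2^(n-j) * (x-1)^j)"
    using legendre_aux murphy_aux by metis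
  also have "\<dots> = 2^n * (\<Sum>j\<le>n. of_nat (n choose j) * of_nat (n+j choose j) * ((x-1)/2)^j)"
    unfolding sum_distrib_left
  proof (rule sum.cong[OF refl])
    fix j assume "j \<in> {..n}"
    hence "(2::rat)^n = 2^(n-j) * 2^j" by (simp flip: power_add)
    thus "of_nat (n choose j) * of_nat (n+j choose j) * 2^(n-j) * (x-1)^j = 2^n * (of_nat (n choose j) * of_nat (n+j choose j) * ((x-1)/2)^j)"
      by (simp add: power_divide)
  qed
  finally show ?thesis by simp
qed



lemma pint_frac: "coprime d (int p) \<Longrightarrow> p_integral p (of_int m / of_int d)"
  unfolding p_integral_def by blast

lemma pint_int: "p_integral p (of_int m)"
  using pint_frac[of 1 p m] by simp

lemma pint_nat: "p_integral p (of_nat m)"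
  using pint_int[of p "int m"] by simp

lemma pint_elim:
  assumes "prime p" "p_integral p a"
  obtains m d where "coprime d (int p)" "d \<noteq> 0" "a = of_int m / of_int d"
proof -
  obtain m d where md: "coprime d (int p)" "a = of_int m / of_int d" using assms(2) unfolding p_integral_def by blast
  have "d \<noteq> 0" using md(1) assms(1) by (auto simp: prime_gt_1_nat)
  thus ?thesis using md that by blast
qed

lemma pint_add:
  assumes p: "prime p" and a: "p_integral p a" and b: "p_integral p b"
  shows "p_integral p (a + b)"
proof -
  obtain m1 d1 where 1: "coprime d1 (int p)" "d1 \<noteq> 0" "a = of_int m1 / of_int d1" using pint_elim[OF p a] by blast
  obtain m2 d2 where 2: "coprime d2 (int p)" "d2 \<noteq> 0" "b = of_int m2 / of_int d2" using pint_elim[OF p b] by blast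
  have "a + b = of_int (m1*d2 + m2*d1) / of_int (d1*d2)" using 1 2 by (simp add: field_simps)
  moreover have "coprime (d1*d2) (int p)" using 1 2 by simp
  ultimately show ?thesis using pint_frac by metis
qed

lemma pint_mult:
  assumes p: "prime p" and a: "p_integral p a" and b: "p_integral p b"
  shows "p_integral p (a * b)"
proof -
  obtain m1 d1 where 1: "coprime d1 (int p)" "d1 \<noteq> 0" "a = of_int m1 / of_int d1" using pint_elim[OF p a] by blast
  obtain m2 d2 where 2: "coprime d2 (int p)" "d2 \<noteq> 0" "b = of_int m2 / of_int d2" using pint_elim[OF p b] by blast
  have "a * b = of_int (m1*m2) / of_int (d1*d2)" using 1 2 by (simp add: field_simps)
  moreover have "coprime (d1*d2) (int p)" using 1 2 by simp
  ultimately show ?thesis using pint_frac by metis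
qed

lemma pint_uminus: "p_integral p a \<Longrightarrow> p_integral p (- a)"
  unfolding p_integral_def by (metis minus_divide_left of_int_minus)

lemma pint_diff: "prime p \<Longrightarrow> p_integral p a \<Longrightarrow> p_integral p b \<Longrightarrow> p_integral p (a - b)"
  using pint_add[of p a "-b"] pint_uminus[of p b] by simp

lemma pint_sum: "prime p \<Longrightarrow> (\<And>x. x \<in> A \<Longrightarrow> p_integral p (f x)) \<Longrightarrow> p_integral p (\<Sum>x\<in>A. f x)"
proof (induction A rule: infinite_finite_induct)
  case (infinite A) then show ?case using pint_int[of p 0] by simp
next
  case empty then show ?case using pint_int[of p 0] by simp
next
  case (insert x F) then show ?case using pint_add by simp
qed

lemma pint_power: "prime p \<Longrightarrow> p_integral p a \<Longrightarrow> p_integral p (a ^ k)"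
  by (induction k) (use pint_int[of p 1] pint_mult in auto)

lemma qcongI_int:
  assumes p: "prime p" and "[a = b] (mod int p)"
  shows "qcong (of_int a) (of_int b) p"
proof -
  obtain c where c: "a - b = int p * c" using assms(2) unfolding cong_iff_dvd_diff by (elim dvdE)
  have "(of_int (a - b) :: rat) = of_int (int p * c)" using c by simp
  hence "(of_int a - of_int b :: rat) = of_nat p * of_int c" by simp
  moreover have "(of_nat p :: rat) \<noteq> 0" using p by (simp add: prime_gt_0_nat)
  ultimately have "(of_int a - of_int b) / of_nat p = (of_int c :: rat)" by simp
  thus ?thesis unfolding qcong_def using pint_int[of p] by simp
qed

lemma qcong_refl: "p_integral p a \<Longrightarrow> qcong a a p"
  unfolding qcong_def using pint_int[of p 0] by simp

lemma qcong_sym: assumes "qcong a b p" shows "qcong b a p"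
proof -
  have "(b - a) / of_nat p = - ((a - b) / of_nat p)" by (metis minus_diff_eq minus_divide_left)
  thus ?thesis using assms pint_uminus unfolding qcong_def by simp
qed

lemma qcong_trans:
  assumes p: "prime p" and ab: "qcong a b p" and bc: "qcong b c p" shows "qcong a c p"
proof -
  have "(a - c) / of_nat p = (a - b) / of_nat p + (b - c) / of_nat p" unfolding add_divide_distrib[symmetric] by simp
  moreover have "p_integral p ((a - b) / of_nat p + (b - c) / of_nat p)"
    using ab bc pint_add[OF p] unfolding qcong_def by blast
  ultimately show ?thesis using ab bc unfolding qcong_def by simp
qed

lemma qcong_add:
  assumes p: "prime p" and ab: "qcong a b p" and cd: "qcong c d p" shows "qcong (a + c) (b + d) p"
proof -
  have "(a + c - (b + d)) / of_nat p = (a - b) / of_nat p + (c - d) / of_nat p" unfolding add_divide_distrib[symmetric] by simp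
  moreover have "p_integral p ((a - b) / of_nat p + (c - d) / of_nat p)"
    using ab cd pint_add[OF p] unfolding qcong_def by blast
  moreover have "p_integral p (a + c)" "p_integral p (b + d)"
    using ab cd pint_add[OF p] unfolding qcong_def by blast+
  ultimately show ?thesis unfolding qcong_def by simp
qed

lemma qcong_mult:
  assumes p: "prime p" and ab: "qcong a b p" and cd: "qcong c d p" shows "qcong (a * c) (b * d) p"
proof -
  have "(a * c - b * d) / of_nat p = a * ((c - d) / of_nat p) + d * ((a - b) / of_nat p)"
    unfolding times_divide_eq_right add_divide_distrib[symmetric] by (simp add: algebra_simps)
  moreover have "p_integral p (a * ((c - d) / of_nat p) + d * ((a - b) / of_nat p))"
    using ab cd pint_add[OF p] pint_mult[OF p] unfolding qcong_def by blast
  moreover have "p_integral p (a * c)" "p_integral p (b * d)"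
    using ab cd pint_mult[OF p] unfolding qcong_def by blast+
  ultimately show ?thesis unfolding qcong_def by simp
qed

lemma qcong_sum:
  assumes p: "prime p" shows "(\<And>x. x \<in> A \<Longrightarrow> qcong (f x) (g x) p) \<Longrightarrow> qcong (\<Sum>x\<in>A. f x) (\<Sum>x\<in>A. g x) p"
proof (induction A rule: infinite_finite_induct)
  case (infinite A) then show ?case using qcong_refl pint_int[of p 0] by simp
next
  case empty then show ?case using qcong_refl pint_int[of p 0] by simp
next
  case (insert x F) then show ?case using qcong_add[OF p] by simp
qed

lemma qcong_inv_int:
  assumes p: "prime p" and c: "[a * b = 1] (mod int p)"
  shows "qcong (1 / of_int a) (of_int b) p"
proof -
  have "coprime (a * b) (int p)" using c cong_imp_coprime cong_sym by (metis coprime_1_left)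
  hence cop: "coprime a (int p)" by simp
  have a0: "a \<noteq> 0" using cop p by (auto simp: prime_gt_1_nat)
  obtain c' where c': "1 - a * b = int p * c'" using cong_sym[OF c] unfolding cong_iff_dvd_diff by (elim dvdE)
  have "(1 / of_int a - of_int b) = (of_int (1 - a*b) / of_int a :: rat)" using a0 by (simp add: field_simps)
  also have "\<dots> = of_nat p * (of_int c' / of_int a)" unfolding c' by simp
  finally have "(1 / of_int a - of_int b) / of_nat p = (of_int c' / of_int a :: rat)"
    using p by (simp add: prime_gt_0_nat)
  moreover have "p_integral p (1 / of_int a)" using pint_frac[OF cop, of 1] by simp
  ultimately show ?thesis unfolding qcong_def using pint_frac[OF cop] pint_int by simp
qed



definition Tn :: "nat \<Rightarrow> rat \<Rightarrow> rat" where
  "Tn n u = (\<Sum>k\<le>n. of_nat ((n choose k)^2) * u^k)"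

lemma Tn_refl:
  assumes u: "u \<noteq> 0" shows "Tn n (1/u) = (1/u)^n * Tn n u"
proof -
  have "Tn n u = (\<Sum>k\<le>n. of_nat ((n choose (n-k))^2) * u^(n-k))"
    unfolding Tn_def by (rule sum_reflect)
  also have "\<dots> = (\<Sum>k\<le>n. u^n * (of_nat ((n choose k)^2) * (1/u)^k))"
  proof (rule sum.cong[OF refl])
    fix k assume k: "k \<in> {..n}"
    hence "n choose (n-k) = n choose k" using binomial_symmetric[of k n] by simp
    moreover have "u^(n-k) = u^n * (1/u)^k"
    proof -
      have "u^n = u^(n-k) * u^k" using k by (simp flip: power_add)
      thus ?thesis using u by (simp add: power_one_over field_simps)
    qed
    ultimately show "of_nat ((n choose (n-k))^2) * u^(n-k) = u^n * (of_nat ((n choose k)^2) * (1/u)^k)"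
      by simp
  qed
  also have "\<dots> = u^n * Tn n (1/u)" unfolding Tn_def by (simp add: sum_distrib_left)
  finally have "Tn n u = u^n * Tn n (1/u)" .
  hence "(1/u)^n * Tn n u = ((1/u)^n * u^n) * Tn n (1/u)" by simp
  also have "(1/u)^n * u^n = 1" using u by (simp add: power_one_over)
  finally show ?thesis by simp
qed

lemma pint_Tn: "prime p \<Longrightarrow> p_integral p u \<Longrightarrow> p_integral p (Tn n u)"
  unfolding Tn_def by (intro pint_sum pint_mult pint_nat pint_power) auto

context
  fixes p n :: nat
  assumes p: "prime p" "p > 3" and n: "n = (p - 1) div 2"
begin

lemma pn: "2*n+1 = p"
proof -
  have "odd p" using p prime_odd_nat by auto
  thus ?thesis using n p by presburger
qed

lemma n_pos: "n \<ge> 1" using p n by auto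

lemma LP:
  assumes u: "p_integral p u"
  shows "qcong (legendre_poly n (1 - 2*u)) (Tn n u) p"
proof -
  have "legendre_poly n (1 - 2*u) = (\<Sum>j\<le>n. of_nat (n choose j) * of_nat (n+j choose j) * (-u)^j)"
    using legendre_murphy[of n "1 - 2*u"] by simp
  moreover have "qcong (\<Sum>j\<le>n. of_nat (n choose j) * of_nat (n+j choose j) * (-u)^j) (Tn n u) p"
    unfolding Tn_def
  proof (rule qcong_sum[OF p(1)])
    fix j assume j: "j \<in> {..n}"
    have c: "[int (n+j choose j) = (-1)^j * int (n choose j)] (mod int p)"
      using binom_nk[OF p(1) pn] j by simp
    have "[int (n choose j) * int (n+j choose j) * (-1)^j = int (n choose j) * ((-1)^j * int (n choose j)) * (-1)^j] (mod int p)"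
      by (intro cong_mult c cong_refl)
    also have "int (n choose j) * ((-1)^j * int (n choose j)) * (-1)^j = int ((n choose j)^2)"
    proof -
      have "((-1::int)^j)^2 = 1" by (simp flip: power_mult add: mult.commute)
      thus ?thesis by (simp add: power2_eq_square algebra_simps)
    qed
    finally have "qcong (of_int (int (n choose j) * int (n+j choose j) * (-1)^j)) (of_int (int ((n choose j)^2))) p"
      by (rule qcongI_int[OF p(1)])
    hence "qcong (of_int (int (n choose j) * int (n+j choose j) * (-1)^j) * u^j) (of_int (int ((n choose j)^2)) * u^j) p"
      using qcong_mult[OF p(1)] qcong_refl pint_power[OF p(1) u] by blast
    moreover have E: "of_nat (n choose j) * of_nat (n+j choose j) * (-u)^j = of_int (int (n choose j) * int (n+j choose j) * (-1)^j) * u^j"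
      by (simp add: power_minus[of u j] mult_ac)
    moreover have E2: "of_nat ((n choose j)^2) * u^j = of_int (int ((n choose j)^2)) * u^j" by simp
    ultimately show "qcong (of_nat (n choose j) * of_nat (n+j choose j) * (-u)^j) (of_nat ((n choose j)^2) * u^j) p"
      by (simp only: E E2)
  qed
  ultimately show ?thesis by simp
qed

lemma LB:
  assumes c: "p_integral p c"
  shows "qcong (\<Sum>k\<le>n. of_nat ((2*k choose k)^2) * c^k) (Tn n (16*c)) p"
  unfolding Tn_def
proof (rule qcong_sum[OF p(1)])
  fix k assume k: "k \<in> {..n}"
  have "[int (2*k choose k)^2 = ((-4)^k * int (n choose k))^2] (mod int p)"
    using binom_central[OF p(1) pn] k by (intro cong_pow) simp
  also have "((-4)^k * int (n choose k))^2 = 16^k * int ((n choose k)^2)"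
  proof -
    have "((-4::int)^k)^2 = ((-4)^2)^k" by (metis power_mult mult.commute)
    hence "((-4::int)^k)^2 = 16^k" by simp
    thus ?thesis by (simp add: power_mult_distrib)
  qed
  finally have "qcong (of_int (int (2*k choose k)^2)) (of_int (16^k * int ((n choose k)^2))) p"
    by (rule qcongI_int[OF p(1)])
  hence "qcong (of_int (int (2*k choose k)^2) * c^k) (of_int (16^k * int ((n choose k)^2)) * c^k) p"
    using qcong_mult[OF p(1)] qcong_refl pint_power[OF p(1) c] by blast
  thus "qcong (of_nat ((2*k choose k)^2) * c^k) (of_nat ((n choose k)^2) * (16*c)^k) p"
    by (simp add: power_mult_distrib mult_ac)
qed

lemma coprime16: "coprime (16::int) (int p)"
proof -
  have "coprime (2::int) (int p)"
  proof -
    have "\<not> p dvd 2" using p by (auto dest: dvd_imp_le)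
    hence "coprime p 2" using p(1) prime_imp_coprime by blast
    thus ?thesis using coprime_int_iff[of 2 p] by (simp add: coprime_commute)
  qed
  thus ?thesis using coprime_power_left_iff[of "2::int" 4 "int p"] by simp
qed

lemma LC:
  fixes u s :: int
  assumes s: "s^2 = 1" and us: "[u^n = s] (mod int p)"
  shows "qcong (of_int s * (\<Sum>k\<le>n. of_nat ((2*k choose k)^2) * (1/(16*of_int u))^k)) (Tn n (of_int u)) p"
proof -
  have uns: "[u^n * s = 1] (mod int p)"
  proof -
    have "[u^n * s = s * s] (mod int p)" by (intro cong_mult us cong_refl)
    thus ?thesis using s by (simp add: power2_eq_square)
  qed
  have "coprime (u^n * s) (int p)" using uns cong_imp_coprime cong_sym by (metis coprime_1_left)
  hence "coprime (u^n) (int p)" by simp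
  hence cu: "coprime u (int p)" using n_pos by simp
  hence u0: "u \<noteq> 0" using p by (auto simp: prime_gt_1_nat)
  have c16: "coprime (16*u) (int p)" using cu coprime16 by simp
  have pc: "p_integral p (1/(16*of_int u))" using pint_frac[OF c16, of 1] by simp
  have "qcong (\<Sum>k\<le>n. of_nat ((2*k choose k)^2) * (1/(16*of_int u))^k) (Tn n (16 * (1/(16*of_int u)))) p"
    by (rule LB[OF pc])
  also have "Tn n (16 * (1/(16*of_int u))) = (1/of_int (u^n)) * Tn n (of_int u)"
    using Tn_refl[of "of_int u" n] u0 by (simp add: power_one_over)
  finally have A: "qcong (\<Sum>k\<le>n. of_nat ((2*k choose k)^2) * (1/(16*of_int u))^k) ((1/of_int (u^n)) * Tn n (of_int u)) p" .
  have pT: "p_integral p (Tn n (of_int u))" using pint_Tn[OF p(1) pint_int] .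
  have B: "qcong ((1/of_int (u^n)) * Tn n (of_int u)) (of_int s * Tn n (of_int u)) p"
    using qcong_mult[OF p(1) qcong_inv_int[OF p(1) uns] qcong_refl[OF pT]] .
  have C: "qcong (of_int s * (\<Sum>k\<le>n. of_nat ((2*k choose k)^2) * (1/(16*of_int u))^k)) (of_int s * (of_int s * Tn n (of_int u))) p"
    using qcong_mult[OF p(1) qcong_refl[OF pint_int] qcong_trans[OF p(1) A B]] .
  have "of_int s * (of_int s * Tn n (of_int u)) = of_int (s^2) * Tn n (of_int u)"
    by (simp add: power2_eq_square)
  also have "\<dots> = Tn n (of_int u)" using s by simp
  finally have F: "of_int s * (of_int s * Tn n (of_int u)) = Tn n (of_int u)" .
  show ?thesis using C by (simp only: F)
qed

lemma LD:
  fixes e r a u :: int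
  assumes e: "[e * (-((-1)^n * a^n)) = 1] (mod int p)"
  shows "qcong (of_int e * of_int (\<Sum>x\<in>{0..<int p}. Legendre ((x-r)*(x-r-a)*(x-r-a*u)) (int p))) (Tn n (of_int u)) p"
proof -
  define Ti where "Ti = (\<Sum>k\<le>n. int ((n choose k)^2) * u^k)"
  have cs: "[(\<Sum>x\<in>{0..<int p}. Legendre ((x-r)*(x-r-a)*(x-r-a*u)) (int p))
        = - ((-1)^n * (\<Sum>k\<le>n. int ((n choose k)^2) * a^(n-k) * (a*u)^k))] (mod int p)"
    by (rule charsum[OF p n])
  have "(\<Sum>k\<le>n. int ((n choose k)^2) * a^(n-k) * (a*u)^k) = a^n * Ti"
    unfolding Ti_def sum_distrib_left
  proof (rule sum.cong[OF refl])
    fix k assume "k \<in> {..n}"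
    hence "a^n = a^(n-k) * a^k" by (simp flip: power_add)
    thus "int ((n choose k)^2) * a^(n-k) * (a*u)^k = a^n * (int ((n choose k)^2) * u^k)"
      by (simp add: power_mult_distrib algebra_simps)
  qed
  hence "[e * (\<Sum>x\<in>{0..<int p}. Legendre ((x-r)*(x-r-a)*(x-r-a*u)) (int p)) = e * (- ((-1)^n * (a^n * Ti)))] (mod int p)"
    using cs by (intro cong_mult cong_refl) simp
  also have "e * (- ((-1)^n * (a^n * Ti))) = (e * (-((-1)^n * a^n))) * Ti" by (simp add: algebra_simps)
  also have "[\<dots> = 1 * Ti] (mod int p)" by (intro cong_mult e cong_refl)
  finally have "qcong (of_int (e * (\<Sum>x\<in>{0..<int p}. Legendre ((x-r)*(x-r-a)*(x-r-a*u)) (int p)))) (of_int (1 * Ti)) p"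
    by (rule qcongI_int[OF p(1)])
  moreover have "(of_int Ti :: rat) = Tn n (of_int u)" unfolding Ti_def Tn_def by simp
  ultimately show ?thesis by simp
qed

end



lemma sum_div_conv: "(\<Sum>k\<le>n. f k / (d::rat)^k) = (\<Sum>k\<le>n. f k * (1/d)^k)"
  by (simp add: power_one_over)

context
  fixes p n :: nat
  assumes p: "prime p" "p > 3" and n: "n = (p - 1) div 2"
begin

lemma pn': "2*n+1 = p" using pn[OF p n] .

lemma Leg_sq: assumes "\<not> int p dvd a" shows "(Legendre a (int p))^2 = 1"
  using assms unfolding Legendre_def by (auto simp: cong_0_iff)

lemma eul: "[Legendre a (int p) = a^n] (mod int p)"
  using euler_criterion[of p a] p n by simp

lemma four: "[4^n = (1::int)] (mod int p)"
proof -
  have pm: "p - 1 = 2*n" using pn' by simp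
  have "(4::int)^n = 2^(p-1)" unfolding pm by (simp add: power_mult)
  moreover have "[(2::int)^(p-1) = 1] (mod int p)" using fermat_int[OF p(1), of 2] p by simp
  ultimately show ?thesis by simp
qed

lemma sixteen: "[16^n = (1::int)] (mod int p)"
proof -
  have "[(4::int)^n * 4^n = 1 * 1] (mod int p)" by (intro cong_mult four)
  thus ?thesis by (simp flip: power_mult_distrib)
qed

lemma neg_pow: "[(- (c::int))^n = (-1)^n * c^n] (mod int p)"
  by (simp add: power_minus[of c n])

lemma ndvd_small: assumes "0 < c" "c < int p" shows "\<not> int p dvd c"
  using assms zdvd_imp_le by fastforce

lemma ndvd: "\<not> int p dvd 2" "\<not> int p dvd -2" "\<not> int p dvd 3"
  using ndvd_small[of 2] ndvd_small[of 3] p by auto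


lemma qr3: "Legendre (int p) 3 * Legendre 3 (int p) = (-1)^n"
proof -
  have "Legendre (int p) (int 3) * Legendre (int 3) (int p) = (-1::int) ^ ((p - 1) div 2 * ((3 - 1) div 2))"
    using Quadratic_Reciprocity[of p 3] p by simp
  thus ?thesis using n by simp
qed

lemma cond3: "[(- Legendre (int p) 3) * (-((-1)^n * 3^n)) = 1] (mod int p)"
proof -
  have "(- Legendre (int p) 3) * (-((-1)^n * 3^n)) = Legendre (int p) 3 * ((-1)^n * 3^n)" by simp
  also have "[\<dots> = Legendre (int p) 3 * ((-1)^n * Legendre 3 (int p))] (mod int p)"
    by (intro cong_mult cong_refl cong_sym[OF eul])
  also have "Legendre (int p) 3 * ((-1)^n * Legendre 3 (int p)) = (-1)^n * (-1)^n" using qr3 by (simp add: algebra_simps)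
  also have "(-1::int)^n * (-1)^n = 1" by (simp flip: power_add)
  finally show ?thesis .
qed

lemma condm: "[(-1)^(n+1) * (-((-1)^n * 1^n)) = (1::int)] (mod int p)"
proof -
  have "(-1::int)^(n+1) * (-((-1)^n * 1^n)) = (-1)^(n+1) * (-1)^(n+1)" by simp
  also have "\<dots> = 1" by (simp flip: power_add)
  finally show ?thesis by simp
qed

lemma pint16: "p_integral p (c::rat) \<Longrightarrow> True" by simp

lemma row1:
  "qcong (legendre_poly n (-31)) (Tn n 16) p"
  "qcong (\<Sum>k\<le>n. of_nat ((2*k choose k)^2)) (Tn n 16) p"
  "qcong (\<Sum>k\<le>n. of_nat ((2*k choose k)^2) / (256) ^ k) (Tn n 16) p"
  "qcong (- of_int (Legendre (int p) 3) * of_int (\<Sum>x\<in>{0..<int p}. Legendre (x^3 - 723*x - 7378) (int p))) (Tn n 16) p"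
proof -
  show "qcong (legendre_poly n (-31)) (Tn n 16) p"
    using LP[OF p n, of 16] pint_int[of p 16] by simp
  show "qcong (\<Sum>k\<le>n. of_nat ((2*k choose k)^2)) (Tn n 16) p"
    using LB[OF p n, of 1] pint_int[of p 1] by simp
  show "qcong (\<Sum>k\<le>n. of_nat ((2*k choose k)^2) / (256) ^ k) (Tn n 16) p"
    using LC[OF p n, of 1 16] sixteen by (simp add: sum_div_conv)
  have e: "(\<Sum>x\<in>{0..<int p}. Legendre (x^3 - 723*x - 7378) (int p))
     = (\<Sum>x\<in>{0..<int p}. Legendre ((x - -17)*(x - -17 - 3)*(x - -17 - 3*16)) (int p))"
    by (intro sum.cong refl arg_cong[where f="\<lambda>t. Legendre t (int p)"]) (simp add: power3_eq_cube algebra_simps)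
  show "qcong (- of_int (Legendre (int p) 3) * of_int (\<Sum>x\<in>{0..<int p}. Legendre (x^3 - 723*x - 7378) (int p))) (Tn n 16) p"
    using LD[OF p n cond3, of "-17" 16] unfolding e by simp
qed


lemma pint_u16: "p_integral p (of_int u / 16)"
  using pint_frac[OF coprime16[OF p n], of u] by simp

lemma negpow_cong: assumes "[c^n = (1::int)] (mod int p)" shows "[(-c)^n = (-1)^n] (mod int p)"
proof -
  have "(-c)^n = (-1)^n * c^n" by (simp add: power_minus[of c n])
  also have "[\<dots> = (-1)^n * 1] (mod int p)" by (intro cong_mult cong_refl assms)
  finally show ?thesis by simp
qed

lemma sq_neg1: "((-1::int)^n)^2 = 1" by (simp flip: power_mult)

lemma eight: "[8^n = Legendre 2 (int p)] (mod int p)"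
proof -
  have "(8::int)^n = 2^n * 4^n" by (simp flip: power_mult_distrib)
  also have "[\<dots> = Legendre 2 (int p) * 1] (mod int p)" by (intro cong_mult four cong_sym[OF eul])
  finally show ?thesis by simp
qed

lemma row2:
  "qcong (legendre_poly n 33) (Tn n (-16)) p"
  "qcong (\<Sum>k\<le>n. (-1) ^ k * of_nat ((2*k choose k)^2)) (Tn n (-16)) p"
  "qcong ((-1) ^ n * (\<Sum>k\<le>n. of_nat ((2*k choose k)^2) / (-256) ^ k)) (Tn n (-16)) p"
  "qcong ((-1) ^ (n+1) * of_int (\<Sum>x\<in>{0..<int p}. Legendre (x^3 - 91*x + 330) (int p))) (Tn n (-16)) p"
proof -
  show "qcong (legendre_poly n 33) (Tn n (-16)) p"
    using LP[OF p n, of "-16"] pint_int[of p "-16"] by simp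
  show "qcong (\<Sum>k\<le>n. (-1) ^ k * of_nat ((2*k choose k)^2)) (Tn n (-16)) p"
    using LB[OF p n pint_u16[of "-16"]] by (simp add: mult.commute)
  show "qcong ((-1) ^ n * (\<Sum>k\<le>n. of_nat ((2*k choose k)^2) / (-256) ^ k)) (Tn n (-16)) p"
    using LC[OF p n sq_neg1 negpow_cong[OF sixteen]] by (simp add: sum_div_conv)
  have e: "(\<Sum>x\<in>{0..<int p}. Legendre (x^3 - 91*x + 330) (int p))
     = (\<Sum>x\<in>{0..<int p}. Legendre ((x - 5)*(x - 5 - 1)*(x - 5 - 1*(-16))) (int p))"
    by (intro sum.cong refl arg_cong[where f="\<lambda>t. Legendre t (int p)"]) (simp add: power3_eq_cube algebra_simps)
  show "qcong ((-1) ^ (n+1) * of_int (\<Sum>x\<in>{0..<int p}. Legendre (x^3 - 91*x + 330) (int p))) (Tn n (-16)) p"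
    using LD[OF p n condm, of 5 "-16"] unfolding e by simp
qed

lemma row3:
  "qcong (legendre_poly n (-15)) (Tn n 8) p"
  "qcong (\<Sum>k\<le>n. of_nat ((2*k choose k)^2) / 2 ^ k) (Tn n 8) p"
  "qcong (of_int (Legendre 2 (int p)) * (\<Sum>k\<le>n. of_nat ((2*k choose k)^2) / 128 ^ k)) (Tn n 8) p"
  "qcong ((-1) ^ (n+1) * of_int (\<Sum>x\<in>{0..<int p}. Legendre (x^3 - 19*x - 30) (int p))) (Tn n 8) p"
proof -
  show "qcong (legendre_poly n (-15)) (Tn n 8) p"
    using LP[OF p n, of 8] pint_int[of p 8] by simp
  show "qcong (\<Sum>k\<le>n. of_nat ((2*k choose k)^2) / 2 ^ k) (Tn n 8) p"
    using LB[OF p n pint_u16[of 8]] by (simp add: sum_div_conv)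
  show "qcong (of_int (Legendre 2 (int p)) * (\<Sum>k\<le>n. of_nat ((2*k choose k)^2) / 128 ^ k)) (Tn n 8) p"
    using LC[OF p n Leg_sq[OF ndvd(1)] eight] by (simp add: sum_div_conv)
  have e: "(\<Sum>x\<in>{0..<int p}. Legendre (x^3 - 19*x - 30) (int p))
     = (\<Sum>x\<in>{0..<int p}. Legendre ((x - -3)*(x - -3 - 1)*(x - -3 - 1*8)) (int p))"
    by (intro sum.cong refl arg_cong[where f="\<lambda>t. Legendre t (int p)"]) (simp add: power3_eq_cube algebra_simps)
  show "qcong ((-1) ^ (n+1) * of_int (\<Sum>x\<in>{0..<int p}. Legendre (x^3 - 19*x - 30) (int p))) (Tn n 8) p"
    using LD[OF p n condm, of "-3" 8] unfolding e by simp
qed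

lemma row4:
  "qcong (legendre_poly n 9) (Tn n (-4)) p"
  "qcong (\<Sum>k\<le>n. of_nat ((2*k choose k)^2) / (-4) ^ k) (Tn n (-4)) p"
  "qcong ((-1) ^ n * (\<Sum>k\<le>n. of_nat ((2*k choose k)^2) / (-64) ^ k)) (Tn n (-4)) p"
  "qcong ((-1) ^ (n+1) * of_int (\<Sum>x\<in>{0..<int p}. Legendre (x^3 - 7*x + 6) (int p))) (Tn n (-4)) p"
proof -
  show "qcong (legendre_poly n 9) (Tn n (-4)) p"
    using LP[OF p n, of "-4"] pint_int[of p "-4"] by simp
  show "qcong (\<Sum>k\<le>n. of_nat ((2*k choose k)^2) / (-4) ^ k) (Tn n (-4)) p"
    using LB[OF p n pint_u16[of "-4"]] by (simp add: sum_div_conv)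
  show "qcong ((-1) ^ n * (\<Sum>k\<le>n. of_nat ((2*k choose k)^2) / (-64) ^ k)) (Tn n (-4)) p"
    using LC[OF p n sq_neg1 negpow_cong[OF four]] by (simp add: sum_div_conv)
  have e: "(\<Sum>x\<in>{0..<int p}. Legendre (x^3 - 7*x + 6) (int p))
     = (\<Sum>x\<in>{0..<int p}. Legendre ((x - 1)*(x - 1 - 1)*(x - 1 - 1*(-4))) (int p))"
    by (intro sum.cong refl arg_cong[where f="\<lambda>t. Legendre t (int p)"]) (simp add: power3_eq_cube algebra_simps)
  show "qcong ((-1) ^ (n+1) * of_int (\<Sum>x\<in>{0..<int p}. Legendre (x^3 - 7*x + 6) (int p))) (Tn n (-4)) p"
    using LD[OF p n condm, of 1 "-4"] unfolding e by simp
qed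

lemma row5:
  "qcong (legendre_poly n 5) (Tn n (-2)) p"
  "qcong (\<Sum>k\<le>n. of_nat ((2*k choose k)^2) / (-8) ^ k) (Tn n (-2)) p"
  "qcong (of_int (Legendre (-2) (int p)) * (\<Sum>k\<le>n. of_nat ((2*k choose k)^2) / (-32) ^ k)) (Tn n (-2)) p"
  "qcong (- of_int (Legendre (int p) 3) * of_int (\<Sum>x\<in>{0..<int p}. Legendre (x^3 - 21*x + 20) (int p))) (Tn n (-2)) p"
proof -
  show "qcong (legendre_poly n 5) (Tn n (-2)) p"
    using LP[OF p n, of "-2"] pint_int[of p "-2"] by simp
  show "qcong (\<Sum>k\<le>n. of_nat ((2*k choose k)^2) / (-8) ^ k) (Tn n (-2)) p"
    using LB[OF p n pint_u16[of "-2"]] by (simp add: sum_div_conv)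
  show "qcong (of_int (Legendre (-2) (int p)) * (\<Sum>k\<le>n. of_nat ((2*k choose k)^2) / (-32) ^ k)) (Tn n (-2)) p"
    using LC[OF p n Leg_sq[OF ndvd(2)] cong_sym[OF eul[of "-2"]]] by (simp add: sum_div_conv)
  have e: "(\<Sum>x\<in>{0..<int p}. Legendre (x^3 - 21*x + 20) (int p))
     = (\<Sum>x\<in>{0..<int p}. Legendre ((x - 1)*(x - 1 - 3)*(x - 1 - 3*(-2))) (int p))"
    by (intro sum.cong refl arg_cong[where f="\<lambda>t. Legendre t (int p)"]) (simp add: power3_eq_cube algebra_simps)
  show "qcong (- of_int (Legendre (int p) 3) * of_int (\<Sum>x\<in>{0..<int p}. Legendre (x^3 - 21*x + 20) (int p))) (Tn n (-2)) p"
    using LD[OF p n cond3, of 1 "-2"] unfolding e by simp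
qed
end


theorem theorem2p12:
  fixes p :: nat
  assumes "prime p" and "p > 3"
  defines "n \<equiv> (p - 1) div 2"
  shows
   "(qcong (legendre_poly n (-31)) ((\<Sum>k\<le>n. of_nat ((2*k choose k)^2))) p)
    \<and> (qcong ((\<Sum>k\<le>n. of_nat ((2*k choose k)^2))) ((\<Sum>k\<le>n. of_nat ((2*k choose k)^2) / (256) ^ k)) p)
    \<and> (qcong ((\<Sum>k\<le>n. of_nat ((2*k choose k)^2) / (256) ^ k)) (- of_int (Legendre (int p) 3) * of_int (\<Sum>x\<in>{0..<int p}. Legendre (x^3 - 723*x - 7378) (int p))) p)
    \<and> (qcong (legendre_poly n (33)) ((\<Sum>k\<le>n. (-1) ^ k * of_nat ((2*k choose k)^2))) p)
    \<and> (qcong ((\<Sum>k\<le>n. (-1) ^ k * of_nat ((2*k choose k)^2))) ((-1) ^ ((p - 1) div 2) * (\<Sum>k\<le>n. of_nat ((2*k choose k)^2) / (-256) ^ k)) p)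
    \<and> (qcong ((-1) ^ ((p - 1) div 2) * (\<Sum>k\<le>n. of_nat ((2*k choose k)^2) / (-256) ^ k)) ((-1) ^ ((p + 1) div 2) * of_int (\<Sum>x\<in>{0..<int p}. Legendre (x^3 - 91*x + 330) (int p))) p)
    \<and> (qcong (legendre_poly n (-15)) ((\<Sum>k\<le>n. of_nat ((2*k choose k)^2) / (2) ^ k)) p)
    \<and> (qcong ((\<Sum>k\<le>n. of_nat ((2*k choose k)^2) / (2) ^ k)) (of_int (Legendre (2::int) (int p)) * (\<Sum>k\<le>n. of_nat ((2*k choose k)^2) / (128) ^ k)) p)
    \<and> (qcong (of_int (Legendre (2::int) (int p)) * (\<Sum>k\<le>n. of_nat ((2*k choose k)^2) / (128) ^ k)) ((-1) ^ ((p + 1) div 2) * of_int (\<Sum>x\<in>{0..<int p}. Legendre (x^3 - 19*x - 30) (int p))) p)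
    \<and> (qcong (legendre_poly n (9)) ((\<Sum>k\<le>n. of_nat ((2*k choose k)^2) / (-4) ^ k)) p)
    \<and> (qcong ((\<Sum>k\<le>n. of_nat ((2*k choose k)^2) / (-4) ^ k)) ((-1) ^ ((p - 1) div 2) * (\<Sum>k\<le>n. of_nat ((2*k choose k)^2) / (-64) ^ k)) p)
    \<and> (qcong ((-1) ^ ((p - 1) div 2) * (\<Sum>k\<le>n. of_nat ((2*k choose k)^2) / (-64) ^ k)) ((-1) ^ ((p + 1) div 2) * of_int (\<Sum>x\<in>{0..<int p}. Legendre (x^3 - 7*x + 6) (int p))) p)
    \<and> (qcong (legendre_poly n (5)) ((\<Sum>k\<le>n. of_nat ((2*k choose k)^2) / (-8) ^ k)) p)
    \<and> (qcong ((\<Sum>k\<le>n. of_nat ((2*k choose k)^2) / (-8) ^ k)) (of_int (Legendre (-2::int) (int p)) * (\<Sum>k\<le>n. of_nat ((2*k choose k)^2) / (-32) ^ k)) p)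
    \<and> (qcong (of_int (Legendre (-2::int) (int p)) * (\<Sum>k\<le>n. of_nat ((2*k choose k)^2) / (-32) ^ k)) (- of_int (Legendre (int p) 3) * of_int (\<Sum>x\<in>{0..<int p}. Legendre (x^3 - 21*x + 20) (int p))) p)"
proof -
  have nn: "n = (p - 1) div 2" by (simp add: n_def)
  have pn0: "2*n+1 = p" using pn[OF assms(1,2) nn] .
  have e1: "(p - 1) div 2 = n" using nn by simp
  have e2: "(p + 1) div 2 = n + 1" using pn0 by presburger
  note P = assms(1)
  note R1 = row1[OF assms(1,2) nn] and R2 = row2[OF assms(1,2) nn] and R3 = row3[OF assms(1,2) nn]
    and R4 = row4[OF assms(1,2) nn] and R5 = row5[OF assms(1,2) nn]
  show ?thesis unfolding e1 e2
    by (intro conjI qcong_trans[OF P R1(1) qcong_sym[OF R1(2)]] qcong_trans[OF P R1(2) qcong_sym[OF R1(3)]]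
        qcong_trans[OF P R1(3) qcong_sym[OF R1(4)]]
        qcong_trans[OF P R2(1) qcong_sym[OF R2(2)]] qcong_trans[OF P R2(2) qcong_sym[OF R2(3)]]
        qcong_trans[OF P R2(3) qcong_sym[OF R2(4)]]
        qcong_trans[OF P R3(1) qcong_sym[OF R3(2)]] qcong_trans[OF P R3(2) qcong_sym[OF R3(3)]]
        qcong_trans[OF P R3(3) qcong_sym[OF R3(4)]]
        qcong_trans[OF P R4(1) qcong_sym[OF R4(2)]] qcong_trans[OF P R4(2) qcong_sym[OF R4(3)]]
        qcong_trans[OF P R4(3) qcong_sym[OF R4(4)]]
        qcong_trans[OF P R5(1) qcong_sym[OF R5(2)]] qcong_trans[OF P R5(2) qcong_sym[OF R5(3)]]
        qcong_trans[OF P R5(3) qcong_sym[OF R5(4)]])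
qed

end
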